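(* Let $H$ be a bialgebra, $L\in HZ^1(H)$ a 1-cocycle and $\alpha\in H'$. Then $$\phi_{L+\delta\alpha}=\phi_L\circ\theta_{\alpha\circ\phi_L},$$ where $\phi_L,\phi_{L+\delta\alpha}\colon H_R\to H$ and $\theta_{\alpha\circ\phi_L}\colon H_R\to H_R$ are defined below.
   Context: $H_R$ is the Connes–Kreimer Hopf algebra of rooted trees over a field $\mathbb K$ of characteristic zero (basis rooted forests, $B_+$ grafts a forest onto a new root, coproduct with $\Delta\circ B_+=B_+\otimes\mathbb 1+(\mathrm{id}\otimes B_+)\circ\Delta$). For an algebra $\mathcal A$ and $M\in\operatorname{End}(\mathcal A)$, $\phi_M\colon H_R\to\mathcal A$ is the unique unital algebra morphism with $\phi_M\circ B_+=M\circ\phi_M$. For a bialgebra $H$, $HZ^1(H)=\{L\in\operatorname{End}(H):\Delta\circ L=(\mathrm{id}\otimes L)\circ\Delta+L\otimes\mathbb 1\}$, $H'=\operatorname{Hom}(H,\mathbb K)$, and $\delta\alpha:=(\mathrm{id}\otimes\alpha)\circ\Delta-\mathbb 1\cdot\alpha$ for $\alpha\in H'$. For $\beta\in H_R'$, $\theta_\beta:=\phi_{B_++\delta\beta}\colon H_R\to H_R$. *)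

theory Defs
  imports Main "HOL.Vector_Spaces" "HOL-Library.Multiset" "HOL-Library.Poly_Mapping" "HOL-Library.Product_Plus"
begin

text \<open>Rooted trees are non-planar: a tree is a root with a multiset of subtrees.
  Forests are multisets of trees; they form the (monomial) basis of H_R.
  H_R is the free commutative algebra on trees, i.e. finitely supported
  K-valued functions on forests with the convolution product (multiset union
  of forests); its unit is the empty forest.\<close>

datatype rtree = Node "rtree multiset"

type_synonym forest = "rtree multiset"
type_synonym 'k HR = "forest \<Rightarrow>\<^sub>0 'k"

definition pm_scale :: "'k::comm_ring_1 \<Rightarrow> ('a \<Rightarrow>\<^sub>0 'k) \<Rightarrow> ('a \<Rightarrow>\<^sub>0 'k)" where
  "pm_scale c p = Poly_Mapping.map (\<lambda>a. c * a) p"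

definition Bplus :: "'k::comm_ring_1 HR \<Rightarrow> 'k HR" where
  "Bplus p = (\<Sum>f\<in>Poly_Mapping.keys p. Poly_Mapping.single {#Node f#} (Poly_Mapping.lookup p f))"

text \<open>H_R \<otimes> H_R is represented on its canonical basis (pairs of forests);
  the product is the convolution product for the componentwise monoid structure.\<close>
definition id_tensor_Bplus :: "(forest \<times> forest \<Rightarrow>\<^sub>0 'k::comm_ring_1) \<Rightarrow> (forest \<times> forest \<Rightarrow>\<^sub>0 'k)" where
  "id_tensor_Bplus t = (\<Sum>ab\<in>Poly_Mapping.keys t. Poly_Mapping.single (fst ab, {#Node (snd ab)#}) (Poly_Mapping.lookup t ab))"

text \<open>Coproduct on trees, determined by  Delta o B_+ = B_+ (x) 1 + (id (x) B_+) o Delta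
  and multiplicativity.\<close>
primrec DeltaT :: "rtree \<Rightarrow> (forest \<times> forest \<Rightarrow>\<^sub>0 'k::comm_ring_1)" where
  "DeltaT (Node ts) = Poly_Mapping.single ({#Node ts#}, {#}) 1
       + id_tensor_Bplus (prod_mset (image_mset DeltaT ts))"

definition DeltaR :: "'k::comm_ring_1 HR \<Rightarrow> (forest \<times> forest \<Rightarrow>\<^sub>0 'k)" where
  "DeltaR p = (\<Sum>f\<in>Poly_Mapping.keys p. pm_scale (Poly_Mapping.lookup p f) (prod_mset (image_mset DeltaT f)))"

text \<open>delta beta := (id (x) beta) o Delta - 1 . beta  on H_R.\<close>
definition deltaR :: "('k::comm_ring_1 HR \<Rightarrow> 'k) \<Rightarrow> 'k HR \<Rightarrow> 'k HR" where
  "deltaR \<beta> p = (\<Sum>ab\<in>Poly_Mapping.keys (DeltaR p).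
        Poly_Mapping.single (fst ab) (Poly_Mapping.lookup (DeltaR p) ab * \<beta> (Poly_Mapping.single (snd ab) 1)))
     - Poly_Mapping.single {#} (\<beta> p)"

text \<open>A commutative K-algebra A is given as a type of class comm_ring_1 together
  with a scalar multiplication scale. phi is a unital algebra morphism H_R -> A
  with phi o B_+ = M o phi.\<close>
definition is_phi :: "('k::comm_ring_1 \<Rightarrow> 'a::comm_ring_1 \<Rightarrow> 'a) \<Rightarrow> ('a \<Rightarrow> 'a) \<Rightarrow> ('k HR \<Rightarrow> 'a) \<Rightarrow> bool" where
  "is_phi scale M \<phi> \<longleftrightarrow>
     (\<forall>p q. \<phi> (p + q) = \<phi> p + \<phi> q) \<and>
     (\<forall>c p. \<phi> (pm_scale c p) = scale c (\<phi> p)) \<and>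
     \<phi> 1 = 1 \<and>
     (\<forall>p q. \<phi> (p * q) = \<phi> p * \<phi> q) \<and>
     (\<forall>p. \<phi> (Bplus p) = M (\<phi> p))"

definition phiM :: "('k::comm_ring_1 \<Rightarrow> 'a::comm_ring_1 \<Rightarrow> 'a) \<Rightarrow> ('a \<Rightarrow> 'a) \<Rightarrow> 'k HR \<Rightarrow> 'a" where
  "phiM scale M = (THE \<phi>. is_phi scale M \<phi>)"

definition theta :: "('k::comm_ring_1 HR \<Rightarrow> 'k) \<Rightarrow> 'k HR \<Rightarrow> 'k HR" where
  "theta \<beta> = phiM pm_scale (\<lambda>p. Bplus p + deltaR \<beta> p)"

text \<open>H^{(x)n} is the free K-vector space on n-tuples (lists of length n) of
  elements of H, modulo the subspace spanned by the multilinearity relations.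
  A tensor is represented by an element of the free space; teq is equality
  in the quotient.\<close>

inductive_set tensor_rels :: "('k::field \<Rightarrow> 'h::ab_group_add \<Rightarrow> 'h) \<Rightarrow> ('h list \<Rightarrow>\<^sub>0 'k) set"
  for scale where
  zero: "0 \<in> tensor_rels scale"
| add: "t \<in> tensor_rels scale \<Longrightarrow> s \<in> tensor_rels scale \<Longrightarrow> t + s \<in> tensor_rels scale"
| smult: "t \<in> tensor_rels scale \<Longrightarrow> pm_scale c t \<in> tensor_rels scale"
| additive: "Poly_Mapping.single (p @ (x + y) # q) 1 - Poly_Mapping.single (p @ x # q) 1
              - Poly_Mapping.single (p @ y # q) 1 \<in> tensor_rels scale"
| homog: "Poly_Mapping.single (p @ scale c x # q) 1 - Poly_Mapping.single (p @ x # q) c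
              \<in> tensor_rels scale"

definition teq :: "('k::field \<Rightarrow> 'h::ab_group_add \<Rightarrow> 'h) \<Rightarrow> ('h list \<Rightarrow>\<^sub>0 'k) \<Rightarrow> ('h list \<Rightarrow>\<^sub>0 'k) \<Rightarrow> bool" where
  "teq scale t s \<longleftrightarrow> t - s \<in> tensor_rels scale"

text \<open>The pure tensor x (as an element of H^{(x)1} = H).\<close>
definition pure :: "'h \<Rightarrow> ('h list \<Rightarrow>\<^sub>0 'k::comm_ring_1)" where
  "pure x = Poly_Mapping.single [x] 1"

definition tcat :: "('h list \<Rightarrow>\<^sub>0 'k::comm_ring_1) \<Rightarrow> ('h list \<Rightarrow>\<^sub>0 'k) \<Rightarrow> ('h list \<Rightarrow>\<^sub>0 'k)" where
  "tcat t s = (\<Sum>xs\<in>Poly_Mapping.keys t. \<Sum>ys\<in>Poly_Mapping.keys s. Poly_Mapping.single (xs @ ys) (Poly_Mapping.lookup t xs * Poly_Mapping.lookup s ys))"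

definition tmult :: "('h::times list \<Rightarrow>\<^sub>0 'k::comm_ring_1) \<Rightarrow> ('h list \<Rightarrow>\<^sub>0 'k) \<Rightarrow> ('h list \<Rightarrow>\<^sub>0 'k)" where
  "tmult t s = (\<Sum>xs\<in>Poly_Mapping.keys t. \<Sum>ys\<in>Poly_Mapping.keys s.
       Poly_Mapping.single (map2 (*) xs ys) (Poly_Mapping.lookup t xs * Poly_Mapping.lookup s ys))"

text \<open>f_1 (x) ... (x) f_n applied to a tensor, where each f_i : H -> H^{(x)k_i}
  (e.g. pure = id, Delta, or a functional landing in H^{(x)0} = K).\<close>
definition tapply :: "('h \<Rightarrow> ('h list \<Rightarrow>\<^sub>0 'k::comm_ring_1)) list \<Rightarrow> ('h list \<Rightarrow>\<^sub>0 'k) \<Rightarrow> ('h list \<Rightarrow>\<^sub>0 'k)" where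
  "tapply fs t = (\<Sum>xs\<in>Poly_Mapping.keys t. pm_scale (Poly_Mapping.lookup t xs)
       (foldr tcat (map2 (\<lambda>f x. f x) fs xs) (Poly_Mapping.single [] 1)))"

text \<open>A (commutative) K-bialgebra on the comm. ring 'h with scalar multiplication
  scale, coproduct Delta (each Delta x a representative of an element of H (x) H)
  and counit eps.\<close>
definition bialgebra :: "('k::field \<Rightarrow> 'h::comm_ring_1 \<Rightarrow> 'h) \<Rightarrow> ('h \<Rightarrow> ('h list \<Rightarrow>\<^sub>0 'k)) \<Rightarrow> ('h \<Rightarrow> 'k) \<Rightarrow> bool" where
  "bialgebra scale \<Delta> \<epsilon> \<longleftrightarrow>
     vector_space scale \<and>
     (\<forall>c x y. scale c (x * y) = scale c x * y) \<and>
     (\<forall>x. Poly_Mapping.keys (\<Delta> x) \<subseteq> {xs. length xs = 2}) \<and>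
     (\<forall>x y. teq scale (\<Delta> (x + y)) (\<Delta> x + \<Delta> y)) \<and>
     (\<forall>c x. teq scale (\<Delta> (scale c x)) (pm_scale c (\<Delta> x))) \<and>
     (\<forall>x. teq scale (tapply [\<Delta>, pure] (\<Delta> x)) (tapply [pure, \<Delta>] (\<Delta> x))) \<and>
     (\<forall>x y. \<epsilon> (x + y) = \<epsilon> x + \<epsilon> y) \<and>
     (\<forall>c x. \<epsilon> (scale c x) = c * \<epsilon> x) \<and>
     (\<forall>x. teq scale (tapply [\<lambda>a. Poly_Mapping.single [] (\<epsilon> a), pure] (\<Delta> x)) (pure x)) \<and>
     (\<forall>x. teq scale (tapply [pure, \<lambda>a. Poly_Mapping.single [] (\<epsilon> a)] (\<Delta> x)) (pure x)) \<and>
     (\<forall>x y. teq scale (\<Delta> (x * y)) (tmult (\<Delta> x) (\<Delta> y))) \<and>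
     teq scale (\<Delta> 1) (Poly_Mapping.single [1, 1] 1) \<and>
     (\<forall>x y. \<epsilon> (x * y) = \<epsilon> x * \<epsilon> y) \<and>
     \<epsilon> 1 = 1"

definition linear_map :: "('k::field \<Rightarrow> 'h::ab_group_add \<Rightarrow> 'h) \<Rightarrow> ('h \<Rightarrow> 'h) \<Rightarrow> bool" where
  "linear_map scale L \<longleftrightarrow> (\<forall>x y. L (x + y) = L x + L y) \<and> (\<forall>c x. L (scale c x) = scale c (L x))"

definition dual_space :: "('k::field \<Rightarrow> 'h::ab_group_add \<Rightarrow> 'h) \<Rightarrow> ('h \<Rightarrow> 'k) set" where
  "dual_space scale = {\<alpha>. (\<forall>x y. \<alpha> (x + y) = \<alpha> x + \<alpha> y) \<and> (\<forall>c x. \<alpha> (scale c x) = c * \<alpha> x)}"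

text \<open>HZ^1(H) = {L in End(H). Delta o L = (id (x) L) o Delta + L (x) 1}.\<close>
definition HZ1 :: "('k::field \<Rightarrow> 'h::comm_ring_1 \<Rightarrow> 'h) \<Rightarrow> ('h \<Rightarrow> ('h list \<Rightarrow>\<^sub>0 'k)) \<Rightarrow> ('h \<Rightarrow> 'h) set" where
  "HZ1 scale \<Delta> = {L. linear_map scale L \<and>
     (\<forall>x. teq scale (\<Delta> (L x))
            (tapply [pure, \<lambda>a. pure (L a)] (\<Delta> x) + Poly_Mapping.single [L x, 1] 1))}"

text \<open>delta alpha := (id (x) alpha) o Delta - 1 . alpha  (an element of End(H)).\<close>
definition delta_dual :: "('k::field \<Rightarrow> 'h::comm_ring_1 \<Rightarrow> 'h) \<Rightarrow> ('h \<Rightarrow> ('h list \<Rightarrow>\<^sub>0 'k)) \<Rightarrow> ('h \<Rightarrow> 'k) \<Rightarrow> 'h \<Rightarrow> 'h" where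
  "delta_dual scale \<Delta> \<alpha> x =
     (\<Sum>xs\<in>Poly_Mapping.keys (\<Delta> x). scale (Poly_Mapping.lookup (\<Delta> x) xs * \<alpha> (xs ! 1)) (xs ! 0)) - scale (\<alpha> x) 1"

end

theory Submission
  imports Defs
begin

definition lsum :: "('a \<Rightarrow> 'b::zero \<Rightarrow> 'c::comm_monoid_add) \<Rightarrow> ('a \<Rightarrow>\<^sub>0 'b) \<Rightarrow> 'c" where
  "lsum h t = (\<Sum>k\<in>Poly_Mapping.keys t. h k (Poly_Mapping.lookup t k))"

definition "hz h \<longleftrightarrow> (\<forall>k. h k 0 = 0)"
definition "hadd h \<longleftrightarrow> (\<forall>k a b. h k (a+b) = h k a + h k b)"

lemma lsum_superset:
  assumes "finite A" "Poly_Mapping.keys t \<subseteq> A" "hz h"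
  shows "lsum h t = (\<Sum>k\<in>A. h k (Poly_Mapping.lookup t k))"
  unfolding lsum_def
  by (rule sum.mono_neutral_left) (use assms in \<open>auto simp: hz_def in_keys_iff\<close>)

lemma lsum_add:
  assumes "hz h" "hadd h"
  shows "lsum h (t + s) = lsum h t + lsum h s"
proof -
  let ?A = "Poly_Mapping.keys t \<union> Poly_Mapping.keys s"
  have "lsum h (t+s) = (\<Sum>k\<in>?A. h k (Poly_Mapping.lookup (t+s) k))"
    using keys_add[of t s] assms by (intro lsum_superset) auto
  also have "\<dots> = (\<Sum>k\<in>?A. h k (Poly_Mapping.lookup t k)) + (\<Sum>k\<in>?A. h k (Poly_Mapping.lookup s k))"
    using assms(2) by (simp add: lookup_add hadd_def sum.distrib)
  also have "\<dots> = lsum h t + lsum h s"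
    using assms by (simp add: lsum_superset[symmetric])
  finally show ?thesis .
qed

lemma lsum_zero [simp]: "lsum h 0 = 0"
  by (simp add: lsum_def)

lemma lsum_single:
  assumes "hz h" shows "lsum h (Poly_Mapping.single k c) = h k c"
  using assms by (cases "c = 0") (auto simp: lsum_def hz_def)

lemma lsum_sum:
  assumes "hz h" "hadd h"
  shows "lsum h (\<Sum>i\<in>I. t i) = (\<Sum>i\<in>I. lsum h (t i))"
  by (induction I rule: infinite_finite_induct) (auto simp: lsum_add[OF assms])

lemma lsum_diff:
  fixes h :: "'a \<Rightarrow> 'b::ab_group_add \<Rightarrow> 'c::ab_group_add"
  assumes "hz h" "hadd h"
  shows "lsum h (t - s) = lsum h t - lsum h s"
  using lsum_add[OF assms, of "t - s" s] by (simp add: algebra_simps)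

lemma lookup_pm_scale [simp]: "Poly_Mapping.lookup (pm_scale c p) k = c * Poly_Mapping.lookup p k"
  by (simp add: pm_scale_def map.rep_eq when_def)

lemma keys_pm_scale: "Poly_Mapping.keys (pm_scale c p) \<subseteq> Poly_Mapping.keys p"
  by (auto simp: in_keys_iff)

lemma pm_scale_mult: "pm_scale c p = Poly_Mapping.single 0 c * p"
  by (simp add: pm_scale_def mult_map_scale_conv_mult)

lemma lsum_scale:
  assumes "hz h"
  shows "lsum h (pm_scale c t) = (\<Sum>k\<in>Poly_Mapping.keys t. h k (c * Poly_Mapping.lookup t k))"
  by (subst lsum_superset[where A="Poly_Mapping.keys t"]) (use assms keys_pm_scale[of c t] in auto)

lemma pm_decomp: "t = (\<Sum>k\<in>Poly_Mapping.keys t. Poly_Mapping.single k (Poly_Mapping.lookup t k))"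
  by (rule poly_mapping_eqI) (simp add: lookup_sum lookup_single when_def in_keys_iff)

locale alg =
  fixes sc :: "'k::comm_ring_1 \<Rightarrow> 'a::comm_ring_1 \<Rightarrow> 'a"
  assumes add_left: "sc (a+b) x = sc a x + sc b x"
    and add_right: "sc a (x+y) = sc a x + sc a y"
    and sc_sc: "sc a (sc b x) = sc (a*b) x"
    and sc_one: "sc 1 x = x"
    and sc_multl: "sc a (x*y) = sc a x * y"
begin

lemma sc_zero_left [simp]: "sc 0 x = 0"
  using add_left[of 0 0 x] by simp

lemma sc_zero_right [simp]: "sc a 0 = 0"
  using add_right[of a 0 0] by simp

lemma sc_multr: "sc a (x*y) = x * sc a y"
  using sc_multl[of a y x] by (simp add: mult.commute)

lemma sc_mm: "sc a x * sc b y = sc (a*b) (x*y)"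
  by (simp add: sc_multl[symmetric] sc_multr[symmetric] sc_sc mult.commute)

lemma sc_sum_right: "sc a (\<Sum>i\<in>I. f i) = (\<Sum>i\<in>I. sc a (f i))"
  by (induction I rule: infinite_finite_induct) (auto simp: add_right)

lemma sc_sum_left: "sc (\<Sum>i\<in>I. f i) x = (\<Sum>i\<in>I. sc (f i) x)"
  by (induction I rule: infinite_finite_induct) (auto simp: add_left)

lemma sc_diff_right: "sc a (x - y) = sc a x - sc a y"
  using add_right[of a "x-y" y] by (simp add: algebra_simps)

lemma sc_minus_left: "sc (a - b) x = sc a x - sc b x"
  using add_left[of "a-b" b x] by (simp add: algebra_simps)

lemma hz_sc: "hz (\<lambda>k c. sc c (g k))" by (simp add: hz_def)
lemma hadd_sc: "hadd (\<lambda>k c. sc c (g k))" by (simp add: hadd_def add_left)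

end

lemma alg_pm: "alg (pm_scale :: 'k::comm_ring_1 \<Rightarrow> ('a::comm_monoid_add \<Rightarrow>\<^sub>0 'k) \<Rightarrow> _)"
  apply unfold_locales
  apply (simp_all add: pm_scale_mult single_add distrib_left distrib_right mult.assoc)
  apply (metis mult.assoc mult_single add_0)
  done



primrec phiT :: "('a::comm_ring_1 \<Rightarrow> 'a) \<Rightarrow> rtree \<Rightarrow> 'a" where
  "phiT M (Node ts) = M (prod_mset (image_mset (phiT M) ts))"

definition phiF :: "('a::comm_ring_1 \<Rightarrow> 'a) \<Rightarrow> forest \<Rightarrow> 'a" where
  "phiF M f = prod_mset (image_mset (phiT M) f)"

lemma phiF_empty [simp]: "phiF M {#} = 1" by (simp add: phiF_def)
lemma phiF_zero [simp]: "phiF M 0 = 1" by (simp add: phiF_def)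
lemma phiF_add: "phiF M (f + g) = phiF M f * phiF M g" by (simp add: phiF_def)
lemma phiF_single: "phiF M {#t#} = phiT M t" by (simp add: phiF_def)
lemma phiF_Node: "phiF M {#Node f#} = M (phiF M f)" by (simp add: phiF_def)

definition phiE :: "('k::comm_ring_1 \<Rightarrow> 'a::comm_ring_1 \<Rightarrow> 'a) \<Rightarrow> ('a \<Rightarrow> 'a) \<Rightarrow> 'k HR \<Rightarrow> 'a" where
  "phiE sc M p = lsum (\<lambda>f c. sc c (phiF M f)) p"

definition lin :: "('k \<Rightarrow> 'a::ab_group_add \<Rightarrow> 'a) \<Rightarrow> ('a \<Rightarrow> 'a) \<Rightarrow> bool" where
  "lin sc M \<longleftrightarrow> (\<forall>x y. M (x+y) = M x + M y) \<and> (\<forall>c x. M (sc c x) = sc c (M x))"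

lemma lin_zero: "lin sc M \<Longrightarrow> M 0 = 0"
  unfolding lin_def by (metis add_cancel_right_right)

lemma lin_sum: "lin sc M \<Longrightarrow> M (\<Sum>i\<in>I. f i) = (\<Sum>i\<in>I. M (f i))"
  by (induction I rule: infinite_finite_induct) (auto simp: lin_zero lin_def)

lemma prod_pm: "(p::('a::comm_monoid_add \<Rightarrow>\<^sub>0 'k::comm_ring_1)) * q =
  (\<Sum>f\<in>Poly_Mapping.keys p. \<Sum>g\<in>Poly_Mapping.keys q.
     Poly_Mapping.single (f+g) (Poly_Mapping.lookup p f * Poly_Mapping.lookup q g))"
proof -
  have "p * q = (\<Sum>f\<in>Poly_Mapping.keys p. Poly_Mapping.single f (Poly_Mapping.lookup p f)) *
      (\<Sum>g\<in>Poly_Mapping.keys q. Poly_Mapping.single g (Poly_Mapping.lookup q g))"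
    using pm_decomp[of p] pm_decomp[of q] by simp
  also have "\<dots> = (\<Sum>f\<in>Poly_Mapping.keys p. \<Sum>g\<in>Poly_Mapping.keys q.
     Poly_Mapping.single (f+g) (Poly_Mapping.lookup p f * Poly_Mapping.lookup q g))" by (simp add: sum_product mult_single)
  finally show ?thesis .
qed

lemma single_scale: "Poly_Mapping.single f c = pm_scale c (Poly_Mapping.single f (1::'k::comm_ring_1))"
  by (rule poly_mapping_eqI) (simp add: lookup_single when_def)

lemma Bplus_single: "Bplus (Poly_Mapping.single f (1::'k::comm_ring_1)) = Poly_Mapping.single {#Node f#} 1"
  by (simp add: Bplus_def)

context alg begin

lemma phiE_exists:
  assumes M: "lin sc M"
  shows "is_phi sc M (phiE sc M)"
proof -
  let ?h = "\<lambda>f c. sc c (phiF M f)"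
  have hz: "hz ?h" and ha: "hadd ?h" by (rule hz_sc, rule hadd_sc)
  have sing: "phiE sc M (Poly_Mapping.single f c) = sc c (phiF M f)" for f c
    unfolding phiE_def by (rule lsum_single[OF hz])
  have add: "phiE sc M (p + q) = phiE sc M p + phiE sc M q" for p q
    unfolding phiE_def by (rule lsum_add[OF hz ha])
  have sum: "phiE sc M (\<Sum>i\<in>I. t i) = (\<Sum>i\<in>I. phiE sc M (t i))" for I t
    unfolding phiE_def by (rule lsum_sum[OF hz ha])
  have scl: "phiE sc M (pm_scale c p) = sc c (phiE sc M p)" for c p
    unfolding phiE_def lsum_scale[OF hz] by (simp add: lsum_def sc_sum_right sc_sc)
  have one: "phiE sc M 1 = 1"
    using sing[of 0 1] by (simp add: sc_one)
  have mult: "phiE sc M (p * q) = phiE sc M p * phiE sc M q" for p q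
  proof -
    have "phiE sc M (p*q) = (\<Sum>f\<in>Poly_Mapping.keys p. \<Sum>g\<in>Poly_Mapping.keys q.
       sc (Poly_Mapping.lookup p f) (phiF M f) * sc (Poly_Mapping.lookup q g) (phiF M g))"
      by (simp add: prod_pm sum sing sc_mm phiF_add)
    also have "\<dots> = phiE sc M p * phiE sc M q"
      by (simp add: phiE_def lsum_def sum_product)
    finally show ?thesis .
  qed
  have bp: "phiE sc M (Bplus p) = M (phiE sc M p)" for p
  proof -
    have "phiE sc M (Bplus p) = (\<Sum>f\<in>Poly_Mapping.keys p. sc (Poly_Mapping.lookup p f) (M (phiF M f)))"
      by (simp add: Bplus_def sum sing phiF_Node)
    also have "\<dots> = M (phiE sc M p)"
      unfolding phiE_def lsum_def lin_sum[OF M] using M by (simp add: lin_def)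
    finally show ?thesis .
  qed
  show ?thesis unfolding is_phi_def using add scl one mult bp by blast
qed

lemma phi_unique:
  assumes "is_phi sc M \<phi>"
  shows "\<phi> = phiE sc M"
proof
  fix p
  have add: "\<phi> (p + q) = \<phi> p + \<phi> q" and scl: "\<phi> (pm_scale c p) = sc c (\<phi> p)"
    and one: "\<phi> 1 = 1" and mult: "\<phi> (p * q) = \<phi> p * \<phi> q" and bp: "\<phi> (Bplus p) = M (\<phi> p)"
    for p q c using assms unfolding is_phi_def by blast+
  have z: "\<phi> 0 = 0" using add[of 0 0] by simp
  have sum: "\<phi> (\<Sum>i\<in>I. t i) = (\<Sum>i\<in>I. \<phi> (t i))" for I t
    by (induction I rule: infinite_finite_induct) (auto simp: z add)
  have tree: "\<phi> (Poly_Mapping.single {#t#} 1) = phiT M t" for t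
  proof (induction t)
    case (Node ts)
    have "\<phi> (Poly_Mapping.single ts 1) = phiF M ts"
      using Node
    proof (induction ts)
      case empty
      then show ?case using one by simp
    next
      case (add t ts)
      have "Poly_Mapping.single (add_mset t ts) (1::'k) = Poly_Mapping.single ts 1 * Poly_Mapping.single {#t#} 1"
        by (simp add: mult_single)
      then show ?case using add by (simp add: mult phiF_def)
    qed
    then show ?case
      by (simp add: Bplus_single[symmetric] bp phiF_def)
  qed
  have forest: "\<phi> (Poly_Mapping.single f 1) = phiF M f" for f
  proof (induction f)
    case empty then show ?case using one by simp
  next
    case (add t ts)
    have "Poly_Mapping.single (add_mset t ts) (1::'k) = Poly_Mapping.single ts 1 * Poly_Mapping.single {#t#} 1"
      by (simp add: mult_single)
    then show ?case using add tree by (simp add: mult phiF_def)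
  qed
  have "\<phi> p = \<phi> (\<Sum>f\<in>Poly_Mapping.keys p. Poly_Mapping.single f (Poly_Mapping.lookup p f))"
    using pm_decomp[of p] by simp
  also have "\<dots> = phiE sc M p"
    by (simp add: sum phiE_def lsum_def single_scale[of _ "Poly_Mapping.lookup p _"] scl forest)
  finally show "\<phi> p = phiE sc M p" .
qed

lemma phiM_eq:
  assumes "lin sc M" shows "phiM sc M = phiE sc M"
  unfolding phiM_def using phiE_exists[OF assms] phi_unique by (rule the_equality)

end



lemma alg_vs:
  assumes "vector_space sc" "\<forall>c x y. sc c (x * y) = sc c x * y"
  shows "alg sc"
  using assms unfolding vector_space_def by unfold_locales auto

definition bil :: "('k \<Rightarrow> 'h \<Rightarrow> 'h) \<Rightarrow> ('h::ab_group_add \<Rightarrow> 'h \<Rightarrow> 'h) \<Rightarrow> bool" where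
  "bil sc B \<longleftrightarrow> (\<forall>x y z. B (x+y) z = B x z + B y z) \<and> (\<forall>x y z. B z (x+y) = B z x + B z y)
     \<and> (\<forall>c x z. B (sc c x) z = sc c (B x z)) \<and> (\<forall>c x z. B z (sc c x) = sc c (B z x))"

definition FB :: "('k::zero \<Rightarrow> 'h \<Rightarrow> 'h::comm_monoid_add) \<Rightarrow> ('h \<Rightarrow> 'h \<Rightarrow> 'h) \<Rightarrow> ('h list \<Rightarrow>\<^sub>0 'k) \<Rightarrow> 'h" where
  "FB sc B t = lsum (\<lambda>xs c. if length xs = 2 then sc c (B (xs!0) (xs!1)) else 0) t"

lemma len2_cases: "length xs = 2 \<Longrightarrow> \<exists>a b. xs = [a, b]"
  by (cases xs; cases "tl xs") auto

context alg begin

lemma FB_hz: "hz (\<lambda>xs c. if length xs = 2 then sc c (B (xs!0) (xs!1)) else 0)"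
  by (simp add: hz_def)
lemma FB_hadd: "hadd (\<lambda>xs c. if length xs = 2 then sc c (B (xs!0) (xs!1)) else 0)"
  by (simp add: hadd_def add_left)

lemma FB_add: "FB sc B (t + s) = FB sc B t + FB sc B s"
  unfolding FB_def by (rule lsum_add[OF FB_hz FB_hadd])
lemma FB_diff: "FB sc B (t - s) = FB sc B t - FB sc B s"
  unfolding FB_def by (rule lsum_diff[OF FB_hz FB_hadd])
lemma FB_sum: "FB sc B (\<Sum>i\<in>I. t i) = (\<Sum>i\<in>I. FB sc B (t i))"
  unfolding FB_def by (rule lsum_sum[OF FB_hz FB_hadd])
lemma FB_single: "FB sc B (Poly_Mapping.single xs c) = (if length xs = 2 then sc c (B (xs!0) (xs!1)) else 0)"
  unfolding FB_def by (rule lsum_single[OF FB_hz])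
lemma FB_scale: "FB sc B (pm_scale c t) = sc c (FB sc B t)"
  unfolding FB_def lsum_scale[OF FB_hz] by (auto simp: lsum_def sc_sum_right sc_sc intro!: sum.cong)
lemma FB_zero [simp]: "FB sc B 0 = 0"
  by (simp add: FB_def)

end

lemma FB_rels:
  fixes sc :: "'k::field \<Rightarrow> 'a::comm_ring_1 \<Rightarrow> 'a"
  assumes A: "alg sc" and "bil sc B" "t \<in> tensor_rels sc"
  shows "FB sc B t = 0"
proof -
  interpret alg sc by (fact A)
  show ?thesis using assms(3)
proof induction
  case zero then show ?case by simp
next
  case (add t s) then show ?case by (simp add: FB_add)
next
  case (smult t c) then show ?case by (simp add: FB_scale)
next
  case (additive p x y q)
  have "length (p @ z # q) = 2 \<longleftrightarrow> (p = [] \<and> length q = 1) \<or> (length p = 1 \<and> q = [])" for z :: 'a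
    by (cases p) auto
  then show ?case using assms(2)
    by (auto simp: FB_diff FB_single add_right bil_def length_Suc_conv nth_append)
next
  case (homog p c x q)
  have "length (p @ z # q) = 2 \<longleftrightarrow> (p = [] \<and> length q = 1) \<or> (length p = 1 \<and> q = [])" for z :: 'a
    by (cases p) auto
  then show ?case using assms(2)
    by (auto simp: FB_diff FB_single add_right bil_def length_Suc_conv nth_append sc_one)
qed
qed

lemma FB_teq:
  fixes sc :: "'k::field \<Rightarrow> 'a::comm_ring_1 \<Rightarrow> 'a"
  assumes A: "alg sc" and "bil sc B" "teq sc t s"
  shows "FB sc B t = FB sc B s"
  using FB_rels[OF assms(1,2), of "t - s"] assms(3) alg.FB_diff[OF A] by (simp add: teq_def)



lemma tcat_single: "tcat (Poly_Mapping.single xs c) (Poly_Mapping.single ys d) = Poly_Mapping.single (xs @ ys) (c * d)"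
  by (cases "c = 0"; cases "d = 0") (auto simp: tcat_def)

locale setting =
  fixes sc :: "'k::field \<Rightarrow> 'h::comm_ring_1 \<Rightarrow> 'h"
    and \<Delta> :: "'h \<Rightarrow> ('h list \<Rightarrow>\<^sub>0 'k)"
    and \<epsilon> :: "'h \<Rightarrow> 'k"
    and L :: "'h \<Rightarrow> 'h"
  assumes bia: "bialgebra sc \<Delta> \<epsilon>" and HZ: "L \<in> HZ1 sc \<Delta>"
begin

sublocale alg sc
  using bia unfolding bialgebra_def by (intro alg_vs) auto

lemma len2: "xs \<in> Poly_Mapping.keys (\<Delta> x) \<Longrightarrow> length xs = 2"
  using bia unfolding bialgebra_def by blast
lemma D_add: "teq sc (\<Delta> (x + y)) (\<Delta> x + \<Delta> y)"
  using bia unfolding bialgebra_def by blast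
lemma D_scale: "teq sc (\<Delta> (sc c x)) (pm_scale c (\<Delta> x))"
  using bia unfolding bialgebra_def by blast
lemma D_mult: "teq sc (\<Delta> (x * y)) (tmult (\<Delta> x) (\<Delta> y))"
  using bia unfolding bialgebra_def by blast
lemma D_one: "teq sc (\<Delta> 1) (Poly_Mapping.single [1, 1] 1)"
  using bia unfolding bialgebra_def by blast
lemma L_lin: "lin sc L"
  using HZ unfolding HZ1_def linear_map_def lin_def by blast
lemma L_coc: "teq sc (\<Delta> (L x)) (tapply [pure, \<lambda>a. pure (L a)] (\<Delta> x) + Poly_Mapping.single [L x, 1] 1)"
  using HZ unfolding HZ1_def by blast

lemma FB_len2:
  assumes "\<And>xs. xs \<in> Poly_Mapping.keys t \<Longrightarrow> length xs = 2"
  shows "FB sc B t = (\<Sum>xs\<in>Poly_Mapping.keys t. sc (Poly_Mapping.lookup t xs) (B (xs!0) (xs!1)))"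
  unfolding FB_def lsum_def using assms by (intro sum.cong) auto

lemma FB_tmult:
  "FB sc B (tmult (\<Delta> a) (\<Delta> b)) = (\<Sum>xs\<in>Poly_Mapping.keys (\<Delta> a). \<Sum>ys\<in>Poly_Mapping.keys (\<Delta> b).
      sc (Poly_Mapping.lookup (\<Delta> a) xs * Poly_Mapping.lookup (\<Delta> b) ys) (B (xs!0 * ys!0) (xs!1 * ys!1)))"
  unfolding tmult_def FB_sum FB_single
proof (intro sum.cong refl)
  fix xs ys assume "xs \<in> Poly_Mapping.keys (\<Delta> a)" "ys \<in> Poly_Mapping.keys (\<Delta> b)"
  then obtain x0 x1 y0 y1 where "xs = [x0, x1]" "ys = [y0, y1]"
    using len2 len2_cases by metis
  then show "(if length (map2 (*) xs ys) = 2 then sc (Poly_Mapping.lookup (\<Delta> a) xs * Poly_Mapping.lookup (\<Delta> b) ys)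
       (B (map2 (*) xs ys ! 0) (map2 (*) xs ys ! 1)) else 0) =
     sc (Poly_Mapping.lookup (\<Delta> a) xs * Poly_Mapping.lookup (\<Delta> b) ys) (B (xs ! 0 * ys ! 0) (xs ! 1 * ys ! 1))"
    by simp
qed

lemma FB_tapply:
  assumes "\<And>xs. xs \<in> Poly_Mapping.keys t \<Longrightarrow> length xs = 2"
  shows "FB sc B (tapply [pure, \<lambda>a. pure (L a)] t) =
     (\<Sum>xs\<in>Poly_Mapping.keys t. sc (Poly_Mapping.lookup t xs) (B (xs!0) (L (xs!1))))"
  unfolding tapply_def FB_sum FB_scale
proof (intro sum.cong refl)
  fix xs assume "xs \<in> Poly_Mapping.keys t"
  then obtain x0 x1 where "xs = [x0, x1]"
    using assms len2_cases by metis
  then show "sc (Poly_Mapping.lookup t xs)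
          (FB sc B (foldr tcat (map2 (\<lambda>f x. f x) [pure, \<lambda>a. pure (L a)] xs) (Poly_Mapping.single [] 1))) =
         sc (Poly_Mapping.lookup t xs) (B (xs ! 0) (L (xs ! 1)))"
    by (simp add: pure_def tcat_single FB_single sc_one)
qed

definition GB :: "('h \<Rightarrow> 'h \<Rightarrow> 'h) \<Rightarrow> (forest \<times> forest \<Rightarrow>\<^sub>0 'k) \<Rightarrow> 'h" where
  "GB B t = lsum (\<lambda>ab c. sc c (B (phiF L (fst ab)) (phiF L (snd ab)))) t"

lemma GB_add: "GB B (t + s) = GB B t + GB B s"
  unfolding GB_def by (rule lsum_add[OF hz_sc hadd_sc])
lemma GB_sum: "GB B (\<Sum>i\<in>I. t i) = (\<Sum>i\<in>I. GB B (t i))"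
  unfolding GB_def by (rule lsum_sum[OF hz_sc hadd_sc])
lemma GB_single: "GB B (Poly_Mapping.single ab c) = sc c (B (phiF L (fst ab)) (phiF L (snd ab)))"
  unfolding GB_def by (rule lsum_single[OF hz_sc])
lemma GB_scale: "GB B (pm_scale c t) = sc c (GB B t)"
  unfolding GB_def lsum_scale[OF hz_sc] by (simp add: lsum_def sc_sum_right sc_sc)


lemma bil_Bm: "bil sc B \<Longrightarrow> bil sc (\<lambda>c d. B (a*c) (b*d))"
  unfolding bil_def by (simp add: distrib_left sc_multr[symmetric])

lemma bil_C:
  assumes "bil sc B"
  shows "bil sc (\<lambda>a b. GB (\<lambda>c d. B (a*c) (b*d)) W)"
  using assms unfolding bil_def GB_def lsum_def
  by (simp add: distrib_right sc_multl[symmetric] add_right sum.distrib sc_sum_right sc_sc mult.commute)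

lemma bil_L: "bil sc B \<Longrightarrow> bil sc (\<lambda>a b. B a (L b))"
  using L_lin unfolding bil_def lin_def by simp

lemma forest_step:
  assumes B: "bil sc B"
    and IHt: "\<And>B. bil sc B \<Longrightarrow> FB sc B (\<Delta> (phiT L t)) = GB B (DeltaT t)"
    and IHf: "\<And>B. bil sc B \<Longrightarrow> FB sc B (\<Delta> (phiF L f)) = GB B (prod_mset (image_mset DeltaT f))"
  shows "FB sc B (\<Delta> (phiT L t * phiF L f)) = GB B (DeltaT t * prod_mset (image_mset DeltaT f))"
proof -
  let ?U = "\<Delta> (phiT L t)" and ?V = "\<Delta> (phiF L f)" and ?u = "DeltaT t :: (forest \<times> forest \<Rightarrow>\<^sub>0 'k)"
    and ?w = "prod_mset (image_mset DeltaT f) :: (forest \<times> forest \<Rightarrow>\<^sub>0 'k)"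
  define C where "C = (\<lambda>a b. GB (\<lambda>c d. B (a*c) (b*d)) ?w)"
  have "FB sc B (\<Delta> (phiT L t * phiF L f)) = FB sc B (tmult ?U ?V)"
    by (rule FB_teq[OF alg_axioms B D_mult])
  also have "\<dots> = (\<Sum>xs\<in>Poly_Mapping.keys ?U. sc (Poly_Mapping.lookup ?U xs)
        (FB sc (\<lambda>c d. B (xs!0*c) (xs!1*d)) ?V))"
    by (simp add: FB_tmult FB_len2[OF len2] sc_sum_right sc_sc)
  also have "\<dots> = (\<Sum>xs\<in>Poly_Mapping.keys ?U. sc (Poly_Mapping.lookup ?U xs) (C (xs!0) (xs!1)))"
    unfolding C_def using IHf[OF bil_Bm[OF B]] by simp
  also have "\<dots> = FB sc C ?U"
    by (rule FB_len2[OF len2, symmetric])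
  also have "\<dots> = GB C ?u"
    by (rule IHt) (unfold C_def, rule bil_C[OF B])
  also have "\<dots> = GB B (?u * ?w)"
    unfolding prod_pm GB_sum GB_single C_def
    by (simp add: GB_def lsum_def sc_sum_right sc_sc phiF_add)
  finally show ?thesis .
qed

lemma key:
  "bil sc B \<Longrightarrow> FB sc B (\<Delta> (phiT L t)) = GB B (DeltaT t)"
proof (induction t arbitrary: B)
  case (Node ts)
  have IHf: "FB sc B (\<Delta> (phiF L f)) = GB B (prod_mset (image_mset DeltaT f))"
    if "bil sc B" "set_mset f \<subseteq> set_mset ts" for f B
    using that
  proof (induction f arbitrary: B)
    case empty
    have "FB sc B (\<Delta> (phiF L {#})) = FB sc B (Poly_Mapping.single [1, 1] 1)"
      using FB_teq[OF alg_axioms empty(1) D_one] by simp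
    then show ?case by (simp add: FB_single GB_single sc_one flip: single_one)
  next
    case (add t f)
    have "FB sc B (\<Delta> (phiF L (add_mset t f))) = FB sc B (\<Delta> (phiT L t * phiF L f))"
      by (simp add: phiF_def)
    also have "\<dots> = GB B (DeltaT t * prod_mset (image_mset DeltaT f))"
      using add Node.IH by (intro forest_step) auto
    finally show ?case by simp
  qed
  have "FB sc B (\<Delta> (phiT L (Node ts))) = FB sc B (\<Delta> (L (phiF L ts)))"
    by (simp add: phiF_def)
  also have "\<dots> = FB sc B (tapply [pure, \<lambda>a. pure (L a)] (\<Delta> (phiF L ts))) + B (L (phiF L ts)) 1"
    using FB_teq[OF alg_axioms Node(2) L_coc] by (simp add: FB_add FB_single sc_one)
  also have "\<dots> = FB sc (\<lambda>a b. B a (L b)) (\<Delta> (phiF L ts)) + B (L (phiF L ts)) 1"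
    by (simp add: FB_tapply[OF len2] FB_len2[OF len2])
  also have "\<dots> = GB (\<lambda>a b. B a (L b)) (prod_mset (image_mset DeltaT ts)) + B (L (phiF L ts)) 1"
    using IHf[OF bil_L[OF Node(2)]] by simp
  also have "\<dots> = GB B (DeltaT (Node ts))"
    by (simp add: GB_add GB_single id_tensor_Bplus_def GB_sum phiF_Node add.commute sc_one) (simp add: GB_def lsum_def)
  finally show ?case .
qed

lemma key_forest:
  "bil sc B \<Longrightarrow> FB sc B (\<Delta> (phiF L f)) = GB B (prod_mset (image_mset DeltaT f))"
proof (induction f arbitrary: B)
  case empty
  have "FB sc B (\<Delta> (phiF L {#})) = FB sc B (Poly_Mapping.single [1, 1] 1)"
    using FB_teq[OF alg_axioms empty(1) D_one] by simp
  then show ?case by (simp add: FB_single GB_single sc_one flip: single_one)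
next
  case (add t f)
  have "FB sc B (\<Delta> (phiF L (add_mset t f))) = FB sc B (\<Delta> (phiT L t * phiF L f))"
    by (simp add: phiF_def)
  also have "\<dots> = GB B (DeltaT t * prod_mset (image_mset DeltaT f))"
    using add key by (intro forest_step) auto
  finally show ?case by simp
qed

end



context alg begin
lemma lsum_homog:
  assumes "hz h" "\<And>k a. h k (c*a) = sc c (h k a)"
  shows "lsum h (pm_scale c t) = sc c (lsum h t)"
  unfolding lsum_scale[OF assms(1)] by (simp add: lsum_def sc_sum_right assms(2))

lemma is_phi_props:
  assumes "is_phi sc M \<phi>"
  shows "\<phi> (p + q) = \<phi> p + \<phi> q" "\<phi> (pm_scale c p) = sc c (\<phi> p)" "\<phi> 1 = 1"
    "\<phi> (p * q) = \<phi> p * \<phi> q" "\<phi> (Bplus p) = M (\<phi> p)"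
  using assms unfolding is_phi_def by blast+
end

lemma pm_scale_single: "pm_scale c (Poly_Mapping.single k a) = Poly_Mapping.single k (c * (a::'k::comm_ring_1))"
  by (simp add: pm_scale_def)

lemma lin_Bplus: "lin pm_scale (Bplus :: 'k::comm_ring_1 HR \<Rightarrow> _)"
proof -
  interpret P: alg "pm_scale :: 'k \<Rightarrow> 'k HR \<Rightarrow> _" by (rule alg_pm)
  have e: "Bplus p = lsum (\<lambda>f c. Poly_Mapping.single {#Node f#} c) p" for p :: "'k HR"
    by (simp add: Bplus_def lsum_def)
  have hz: "hz (\<lambda>f c. Poly_Mapping.single {#Node f#} (c::'k))" by (simp add: hz_def)
  have ha: "hadd (\<lambda>f c. Poly_Mapping.single {#Node f#} (c::'k))" by (simp add: hadd_def single_add)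
  show ?thesis unfolding lin_def e
    by (simp add: lsum_add[OF hz ha] P.lsum_homog[OF hz] pm_scale_single)
qed

context setting begin

lemma FBD_add: "bil sc B \<Longrightarrow> FB sc B (\<Delta> (x + y)) = FB sc B (\<Delta> x) + FB sc B (\<Delta> y)"
  using FB_teq[OF alg_axioms _ D_add] by (simp add: FB_add)
lemma FBD_scale: "bil sc B \<Longrightarrow> FB sc B (\<Delta> (sc c x)) = sc c (FB sc B (\<Delta> x))"
  using FB_teq[OF alg_axioms _ D_scale] by (simp add: FB_scale)
lemma FBD_zero: "bil sc B \<Longrightarrow> FB sc B (\<Delta> 0) = 0"
  using FBD_add[of B 0 0] by simp
lemma FBD_sum: "bil sc B \<Longrightarrow> FB sc B (\<Delta> (\<Sum>i\<in>I. x i)) = (\<Sum>i\<in>I. FB sc B (\<Delta> (x i)))"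
  by (induction I rule: infinite_finite_induct) (auto simp: FBD_zero FBD_add)

lemma main:
  fixes \<alpha> :: "'h \<Rightarrow> 'k"
  assumes A: "\<alpha> \<in> dual_space sc"
  shows "phiM sc (\<lambda>x. L x + delta_dual sc \<Delta> \<alpha> x) = phiM sc L \<circ> theta (\<alpha> \<circ> phiM sc L)"
proof -
  interpret P: alg "pm_scale :: 'k \<Rightarrow> 'k HR \<Rightarrow> _" by (rule alg_pm)
  have aadd: "\<alpha> (x + y) = \<alpha> x + \<alpha> y" and asc: "\<alpha> (sc c x) = c * \<alpha> x" for x y c
    using A unfolding dual_space_def by blast+
  define \<phi> where "\<phi> = phiE sc L"
  have phiM_L: "phiM sc L = \<phi>" unfolding \<phi>_def by (rule phiM_eq[OF L_lin])
  have phi: "is_phi sc L \<phi>" unfolding \<phi>_def by (rule phiE_exists[OF L_lin])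
  note pp = is_phi_props[OF phi]
  have phi_single: "\<phi> (Poly_Mapping.single f c) = sc c (phiF L f)" for f c
    unfolding \<phi>_def phiE_def by (rule lsum_single[OF hz_sc])
  have phi_diff: "\<phi> (p - q) = \<phi> p - \<phi> q" for p q
    using pp(1)[of "p - q" q] by (simp add: algebra_simps)
  have phi_sum: "\<phi> (\<Sum>i\<in>I. t i) = (\<Sum>i\<in>I. \<phi> (t i))" for I t
    unfolding \<phi>_def phiE_def by (rule lsum_sum[OF hz_sc hadd_sc])
  define \<beta> where "\<beta> = \<alpha> \<circ> \<phi>"
  have badd: "\<beta> (p + q) = \<beta> p + \<beta> q" and bsc: "\<beta> (pm_scale c p) = c * \<beta> p" for p q c
    unfolding \<beta>_def by (simp_all add: pp aadd asc)
  define M where "M = (\<lambda>p. Bplus p + deltaR \<beta> p)"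
  interpret P2: alg "pm_scale :: 'k \<Rightarrow> (forest \<times> forest \<Rightarrow>\<^sub>0 'k) \<Rightarrow> _" by (rule alg_pm)
  have hzD: "hz (\<lambda>f c. pm_scale c (prod_mset (image_mset DeltaT f) :: forest \<times> forest \<Rightarrow>\<^sub>0 'k))"
    by (simp add: hz_def)
  have haD: "hadd (\<lambda>f c. pm_scale c (prod_mset (image_mset DeltaT f) :: forest \<times> forest \<Rightarrow>\<^sub>0 'k))"
    by (simp add: hadd_def P2.add_left)
  have DR: "DeltaR p = lsum (\<lambda>f c. pm_scale c (prod_mset (image_mset DeltaT f))) p" for p :: "'k HR"
    by (simp add: DeltaR_def lsum_def)
  have DR_add: "DeltaR (p + q) = DeltaR p + DeltaR q" for p q :: "'k HR"
    unfolding DR by (rule lsum_add[OF hzD haD])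
  have DR_sc: "DeltaR (pm_scale c p) = pm_scale c (DeltaR p)" for c and p :: "'k HR"
    unfolding DR by (rule P2.lsum_homog[OF hzD]) (simp add: P2.sc_sc)
  define h2 where "h2 = (\<lambda>ab c. Poly_Mapping.single (fst ab) (c * \<beta> (Poly_Mapping.single (snd ab) 1)) :: 'k HR)"
  have hz2: "hz h2" by (simp add: hz_def h2_def)
  have ha2: "hadd h2" by (simp add: hadd_def h2_def distrib_right single_add)
  have dR: "deltaR \<beta> p = lsum h2 (DeltaR p) - Poly_Mapping.single {#} (\<beta> p)" for p
    by (simp add: deltaR_def lsum_def h2_def)
  have dR_add: "deltaR \<beta> (p + q) = deltaR \<beta> p + deltaR \<beta> q" for p q
    unfolding dR DR_add lsum_add[OF hz2 ha2] badd single_add by (simp add: algebra_simps)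
  have dR_sc: "deltaR \<beta> (pm_scale c p) = pm_scale c (deltaR \<beta> p)" for c p
  proof -
    have l2: "lsum h2 (pm_scale c t) = pm_scale c (lsum h2 t)" for t :: "forest \<times> forest \<Rightarrow>\<^sub>0 'k"
      by (rule P.lsum_homog[OF hz2]) (simp add: h2_def pm_scale_single mult.assoc)
    show ?thesis unfolding dR DR_sc l2 bsc by (simp add: P.sc_diff_right pm_scale_single)
  qed
  have linM: "lin pm_scale M"
    using lin_Bplus unfolding lin_def M_def by (simp add: dR_add dR_sc P.add_right)
  define \<theta> where "\<theta> = phiE pm_scale M"
  have theta_eq: "theta \<beta> = \<theta>"
    unfolding theta_def \<theta>_def M_def[symmetric] by (rule P.phiM_eq[OF linM])
  have th: "is_phi pm_scale M \<theta>" unfolding \<theta>_def by (rule P.phiE_exists[OF linM])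
  note tp = P.is_phi_props[OF th]
  define B where "B = (\<lambda>x y. sc (\<alpha> y) x)"
  have bilB: "bil sc B"
    unfolding bil_def B_def by (simp add: aadd asc add_right add_left sc_sc mult.commute)
  have key2: "FB sc B (\<Delta> (\<phi> y)) = GB B (DeltaR y)" for y
  proof -
    have "GB B (DeltaR y) = (\<Sum>f\<in>Poly_Mapping.keys y. sc (Poly_Mapping.lookup y f) (GB B (prod_mset (image_mset DeltaT f))))"
      by (simp add: DeltaR_def GB_sum GB_scale)
    also have "\<dots> = (\<Sum>f\<in>Poly_Mapping.keys y. sc (Poly_Mapping.lookup y f) (FB sc B (\<Delta> (phiF L f))))"
      by (simp add: key_forest[OF bilB])
    also have "\<dots> = FB sc B (\<Delta> (\<phi> y))"
      by (simp add: \<phi>_def phiE_def lsum_def FBD_sum[OF bilB] FBD_scale[OF bilB])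
    finally show ?thesis by simp
  qed
  have comm: "\<phi> (deltaR \<beta> y) = delta_dual sc \<Delta> \<alpha> (\<phi> y)" for y
  proof -
    have "\<phi> (lsum h2 (DeltaR y)) = GB B (DeltaR y)"
      by (simp add: lsum_def phi_sum h2_def phi_single GB_def B_def \<beta>_def sc_sc sc_one mult.commute)
    moreover have "(\<Sum>xs\<in>Poly_Mapping.keys (\<Delta> (\<phi> y)). sc (Poly_Mapping.lookup (\<Delta> (\<phi> y)) xs * \<alpha> (xs ! 1)) (xs ! 0))
         = FB sc B (\<Delta> (\<phi> y))"
      by (simp add: FB_len2[OF len2] B_def sc_sc)
    ultimately show ?thesis
      unfolding dR phi_diff phi_single delta_dual_def by (simp add: key2 \<beta>_def)
  qed
  have psi: "is_phi sc (\<lambda>x. L x + delta_dual sc \<Delta> \<alpha> x) (\<phi> \<circ> \<theta>)"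
    unfolding is_phi_def using pp tp by (simp add: M_def comm)
  have "phiM sc (\<lambda>x. L x + delta_dual sc \<Delta> \<alpha> x) = \<phi> \<circ> \<theta>"
    unfolding phiM_def
    by (rule the_equality[where P="is_phi sc (\<lambda>x. L x + delta_dual sc \<Delta> \<alpha> x)", OF psi]) (metis phi_unique psi)
  then show ?thesis using phiM_L theta_eq \<beta>_def by simp
qed

end

theorem mainTheorem14:
  fixes scale :: "'k::field_char_0 \<Rightarrow> 'h::comm_ring_1 \<Rightarrow> 'h"
    and \<Delta> :: "'h \<Rightarrow> ('h list \<Rightarrow>\<^sub>0 'k)"
    and \<epsilon> :: "'h \<Rightarrow> 'k"
    and L :: "'h \<Rightarrow> 'h"
    and \<alpha> :: "'h \<Rightarrow> 'k"
  assumes "bialgebra scale \<Delta> \<epsilon>"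
    and "L \<in> HZ1 scale \<Delta>"
    and "\<alpha> \<in> dual_space scale"
  shows "phiM scale (\<lambda>x. L x + delta_dual scale \<Delta> \<alpha> x)
           = phiM scale L \<circ> theta (\<alpha> \<circ> phiM scale L)"
proof -
  interpret setting scale \<Delta> \<epsilon> L using assms(1,2) by unfold_locales
  show ?thesis by (rule main[OF assms(3)])
qed

end
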